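(* Let $p$ be a prime, $m\ge0$, and let $X\hookrightarrow Y$ be an immersion of schemes of characteristic $p$ defined by an ideal $\mathcal I\subset\mathcal O_Y$. Then the map $\mathcal I\to\mathcal P_{Xm}(Y)$, $\varphi\mapsto\varphi^{\{p^{m+1}\}}$, composed with the projection $\mathcal P_{Xm}(Y)\to\mathcal P_{Xm}(Y)/\mathcal I\mathcal P_{Xm}(Y)$, is $F^*$-linear (additive, and $f\varphi\mapsto f^{p^{m+1}}\cdot(\text{image of }\varphi)$ for $f\in\mathcal O_Y$) and vanishes on $\mathcal I^2$.
   Context: $F$ denotes the $(m+1)$-st iterate of the absolute Frobenius, $f\mapsto f^{p^{m+1}}$. A divided power structure of level $m$ on an ideal $\mathcal I$ is an ideal $\mathcal J$ with usual divided powers $x\mapsto x^{[k]}$ such that $\mathcal I^{(p^m)}+p\mathcal I\subset\mathcal J\subset\mathcal I$, where $\mathcal I^{(p^m)}$ is generated by $p^m$-th powers. The partial divided powers are $f^{\{k\}}=f^r(f^{p^m})^{[q]}$ for $k=qp^m+r$, $0\le r<p^m$; they satisfy $f^{\{k\}}f^{\{l\}}=\frac{q_{k+l}!}{q_k!\,q_l!}f^{\{k+l\}}$, where $q_n=\lfloor n/p^m\rfloor$. $\mathcal P_{Xm}(Y)$ is the structure sheaf of the divided power envelope of level $m$ of $X$ in $Y$, i.e. the universal immersion of $X$ with a divided power structure of level $m$ on its ideal (compatible with a fixed one on the base). $\mathcal I$ maps into its level $m$ divided power ideal, and $\mathcal I\mathcal P_{Xm}(Y)$ is the ideal generated by $\mathcal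 I$. *)

theory Defs
  imports "HOL-Algebra.Algebra" "HOL-Computational_Algebra.Primes"
begin

definition divided_powers :: "('b, 'c) ring_scheme \<Rightarrow> 'b set \<Rightarrow> (nat \<Rightarrow> 'b \<Rightarrow> 'b) \<Rightarrow> bool" where
  "divided_powers P J gam \<longleftrightarrow>
     ideal J P \<and>
     (\<forall>x\<in>J. gam 0 x = \<one>\<^bsub>P\<^esub> \<and> gam 1 x = x \<and> (\<forall>n\<ge>1. gam n x \<in> J)) \<and>
     (\<forall>x\<in>J. \<forall>y\<in>J. \<forall>n. gam n (x \<oplus>\<^bsub>P\<^esub> y) =
         (\<Oplus>\<^bsub>P\<^esub>i\<in>{..n}. gam i x \<otimes>\<^bsub>P\<^esub> gam (n - i) y)) \<and>
     (\<forall>a\<in>carrier P. \<forall>x\<in>J. \<forall>n. gam n (a \<otimes>\<^bsub>P\<^esub> x) = a [^]\<^bsub>P\<^esub> n \<otimes>\<^bsub>P\<^esub> gam n x) \<and>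
     (\<forall>x\<in>J. \<forall>i j. gam i x \<otimes>\<^bsub>P\<^esub> gam j x = add_pow P ((i + j) choose i) (gam (i + j) x)) \<and>
     (\<forall>x\<in>J. \<forall>i j. j \<ge> 1 \<longrightarrow>
         gam i (gam j x) = add_pow P (fact (i * j) div (fact i * fact j ^ i) :: nat) (gam (i * j) x))"

definition pd_level :: "('b, 'c) ring_scheme \<Rightarrow> nat \<Rightarrow> nat \<Rightarrow> 'b set \<Rightarrow> 'b set \<Rightarrow> (nat \<Rightarrow> 'b \<Rightarrow> 'b) \<Rightarrow> bool" where
  "pd_level P p m K J gam \<longleftrightarrow>
     ideal K P \<and> divided_powers P J gam \<and> J \<subseteq> K \<and>
     (\<forall>x\<in>K. x [^]\<^bsub>P\<^esub> (p ^ m) \<in> J) \<and>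
     (\<forall>x\<in>K. add_pow P p x \<in> J)"

definition partial_dp :: "('b, 'c) ring_scheme \<Rightarrow> nat \<Rightarrow> nat \<Rightarrow> (nat \<Rightarrow> 'b \<Rightarrow> 'b) \<Rightarrow> nat \<Rightarrow> 'b \<Rightarrow> 'b" where
  "partial_dp P p m gam k f =
     f [^]\<^bsub>P\<^esub> (k mod p ^ m) \<otimes>\<^bsub>P\<^esub> gam (k div p ^ m) (f [^]\<^bsub>P\<^esub> (p ^ m))"

text \<open>Data (h, K, J, gam) on a ring P over A, with h(I) \<subseteq> K, together with compatibility
  with the base PD structure (S, a, b, delta) via g : S \<rightarrow> A (the composite S \<rightarrow> P is a
  morphism of PD rings).\<close>
definition pd_over :: "('s, 't) ring_scheme \<Rightarrow> 's set \<Rightarrow> (nat \<Rightarrow> 's \<Rightarrow> 's) \<Rightarrow> ('s \<Rightarrow> 'a) \<Rightarrow>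
    ('a, 'e) ring_scheme \<Rightarrow> 'a set \<Rightarrow> nat \<Rightarrow> nat \<Rightarrow>
    ('b, 'c) ring_scheme \<Rightarrow> ('a \<Rightarrow> 'b) \<Rightarrow> 'b set \<Rightarrow> 'b set \<Rightarrow> (nat \<Rightarrow> 'b \<Rightarrow> 'b) \<Rightarrow> bool" where
  "pd_over S bb delta g A I p m P h K J gam \<longleftrightarrow>
     cring P \<and> h \<in> ring_hom A P \<and> pd_level P p m K J gam \<and> h ` I \<subseteq> K \<and>
     (h \<circ> g) ` bb \<subseteq> J \<and> (\<forall>s\<in>bb. \<forall>n. gam n (h (g s)) = h (g (delta n s)))"

text \<open>(P, h, K, J, gam) is the divided power envelope of level m of I in A (compatible with
  the base): universal among all such data (on rings of the same carrier type).\<close>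
definition is_pd_envelope :: "('s, 't) ring_scheme \<Rightarrow> 's set \<Rightarrow> (nat \<Rightarrow> 's \<Rightarrow> 's) \<Rightarrow> ('s \<Rightarrow> 'a) \<Rightarrow>
    ('a, 'e) ring_scheme \<Rightarrow> 'a set \<Rightarrow> nat \<Rightarrow> nat \<Rightarrow>
    ('b, 'c) ring_scheme \<Rightarrow> ('a \<Rightarrow> 'b) \<Rightarrow> 'b set \<Rightarrow> 'b set \<Rightarrow> (nat \<Rightarrow> 'b \<Rightarrow> 'b) \<Rightarrow> bool" where
  "is_pd_envelope S bb delta g A I p m P h K J gam \<longleftrightarrow>
     pd_over S bb delta g A I p m P h K J gam \<and>
     (\<forall>(P' :: ('b, 'c) ring_scheme) h' K' J' gam'.
        pd_over S bb delta g A I p m P' h' K' J' gam' \<longrightarrow>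
        (let mor = (\<lambda>u. u \<in> ring_hom P P' \<and> (\<forall>x\<in>carrier A. u (h x) = h' x) \<and>
                          u ` K \<subseteq> K' \<and> u ` J \<subseteq> J' \<and>
                          (\<forall>x\<in>J. \<forall>n. u (gam n x) = gam' n (u x)))
         in (\<exists>u. mor u) \<and> (\<forall>u1 u2. mor u1 \<and> mor u2 \<longrightarrow> (\<forall>x\<in>carrier P. u1 x = u2 x))))"

end

theory Submission
  imports Defs
begin

lemma (in cring) binom:
  assumes a: "a \<in> carrier R" and b: "b \<in> carrier R"
  shows "(a \<oplus> b) [^] n = (\<Oplus>k\<in>{..n}. add_pow R (n choose k) (a [^] k \<otimes> b [^] (n - k)))"
proof (induction n)
  case 0
  then show ?case using a b by simp
next
  case (Suc n)
  define B where "B = (\<Oplus>k\<in>{..n}. add_pow R (n choose k) (a [^] k \<otimes> b [^] (n - k)))"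
  define t where "t = (\<lambda>k. a [^] Suc k \<otimes> b [^] (n - k))"
  define s where "s = (\<lambda>k. a [^] k \<otimes> b [^] (Suc n - k))"
  have tc: "\<And>k. t k \<in> carrier R" unfolding t_def using a b by simp
  have sc: "\<And>k. s k \<in> carrier R" unfolding s_def using a b by simp
  have Bc: "B \<in> carrier R" unfolding B_def using a b by (auto intro!: finsum_closed)
  have "(a \<oplus> b) [^] Suc n = B \<otimes> a \<oplus> B \<otimes> b"
    using Suc a b Bc by (simp add: B_def r_distr)
  also have "B \<otimes> a = (\<Oplus>k\<in>{..n}. add_pow R (n choose k) (t k))"
    unfolding B_def using a b
    by (subst finsum_ldistr) (auto intro!: finsum_cong simp: add_pow_ldistr add_pow_rdistr t_def m_ac)
  also have "B \<otimes> b = (\<Oplus>k\<in>{..n}. add_pow R (n choose k) (s k))"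
    unfolding B_def using a b
    by (subst finsum_ldistr) (auto intro!: finsum_cong simp: add_pow_ldistr add_pow_rdistr s_def m_ac Suc_diff_le)
  also have "(\<Oplus>k\<in>{..n}. add_pow R (n choose k) (s k)) = (\<Oplus>k\<in>{..Suc n}. add_pow R (n choose k) (s k))"
    using sc by (simp add: binomial_eq_0)
  also have "\<dots> = (\<Oplus>k\<in>{..n}. add_pow R (n choose Suc k) (t k)) \<oplus> b [^] Suc n"
    using sc b by (subst finsum_Suc2) (auto simp: s_def t_def)
  finally have "(a \<oplus> b) [^] Suc n = (\<Oplus>k\<in>{..n}. add_pow R (n choose k) (t k)) \<oplus>
     ((\<Oplus>k\<in>{..n}. add_pow R (n choose Suc k) (t k)) \<oplus> b [^] Suc n)" .
  also have "\<dots> = (\<Oplus>k\<in>{..n}. add_pow R (n choose k) (t k) \<oplus> add_pow R (n choose Suc k) (t k)) \<oplus> b [^] Suc n"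
    using tc b by (simp add: finsum_addf a_assoc)
  also have "\<dots> = (\<Oplus>k\<in>{..n}. add_pow R (Suc n choose Suc k) (t k)) \<oplus> b [^] Suc n"
    using tc by (simp add: add.nat_pow_mult)
  also have "\<dots> = (\<Oplus>k\<in>{..Suc n}. add_pow R (Suc n choose k) (a [^] k \<otimes> b [^] (Suc n - k)))"
    using a b by (subst finsum_Suc2) (auto simp: t_def)
  finally show ?case .
qed

lemma (in cring) charp_zero:
  fixes p c :: nat
  assumes ch: "\<forall>z\<in>carrier R. add_pow R p z = \<zero>" and z: "z \<in> carrier R"
  shows "add_pow R (p * c) z = \<zero>"
proof -
  have "add_pow R (p * c) z = add_pow R c (add_pow R p z)"
    using z add.nat_pow_pow[of z c p] add.nat_pow_pow[of z p c] by (simp add: mult.commute)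
  also have "\<dots> = \<zero>" using ch z by simp
  finally show ?thesis .
qed

lemma (in cring) frob_p:
  assumes pr: "Factorial_Ring.prime (p::nat)" and ch: "\<forall>z\<in>carrier R. add_pow R p z = \<zero>"
    and a: "a \<in> carrier R" and b: "b \<in> carrier R"
  shows "(a \<oplus> b) [^] p = a [^] p \<oplus> b [^] p"
proof -
  obtain r where pr2: "p = Suc (Suc r)" using prime_ge_2_nat[OF pr]
    by (metis add_2_eq_Suc le_Suc_ex)
  define f where "f = (\<lambda>k. add_pow R (p choose k) (a [^] k \<otimes> b [^] (p - k)))"
  have fc: "\<And>k. f k \<in> carrier R" unfolding f_def using a b by simp
  have mid: "\<And>i. i \<le> r \<Longrightarrow> f (Suc i) = \<zero>"
  proof -
    fix i assume "i \<le> r"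
    then have "p dvd (p choose Suc i)" using pr pr2 by (intro dvd_choose_prime) auto
    then obtain c where "p choose Suc i = p * c" by blast
    then show "f (Suc i) = \<zero>" unfolding f_def using a b charp_zero[OF ch] by simp
  qed
  have "(a \<oplus> b) [^] p = finsum R f {..Suc (Suc r)}"
    using binom[OF a b, of p] pr2 by (simp add: f_def)
  also have "\<dots> = f (Suc (Suc r)) \<oplus> finsum R f {..Suc r}"
    using fc by (intro finsum_Suc) (auto simp: Pi_def)
  also have "finsum R f {..Suc r} = finsum R (\<lambda>i. f (Suc i)) {..r} \<oplus> f 0"
    using fc by (intro finsum_Suc2) (auto simp: Pi_def)
  also have "finsum R (\<lambda>i. f (Suc i)) {..r} = \<zero>"
    using mid by (simp add: finsum_cong finsum_zero)
  also have "f (Suc (Suc r)) = a [^] p" using a b pr2 by (simp add: f_def)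
  also have "f 0 = b [^] p" using a b by (simp add: f_def)
  finally show ?thesis using a b by simp
qed

lemma (in cring) frob:
  assumes pr: "Factorial_Ring.prime (p::nat)" and ch: "\<forall>z\<in>carrier R. add_pow R p z = \<zero>"
    and a: "a \<in> carrier R" and b: "b \<in> carrier R"
  shows "(a \<oplus> b) [^] (p ^ n) = a [^] (p ^ n) \<oplus> b [^] (p ^ n)"
proof (induction n)
  case 0
  then show ?case using a b by simp
next
  case (Suc n)
  have "(a \<oplus> b) [^] (p ^ Suc n) = ((a \<oplus> b) [^] (p ^ n)) [^] p"
    using a b by (simp add: nat_pow_pow mult.commute)
  also have "\<dots> = (a [^] (p ^ n)) [^] p \<oplus> (b [^] (p ^ n)) [^] p"
    using Suc a b by (simp add: frob_p[OF pr ch])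
  also have "\<dots> = a [^] (p ^ Suc n) \<oplus> b [^] (p ^ Suc n)"
    using a b by (simp add: nat_pow_pow mult.commute)
  finally show ?case .
qed


lemma (in cring) dp_carrier:
  assumes dp: "divided_powers R J gam" and a: "a \<in> J"
  shows "gam i a \<in> carrier R"
proof (cases "i = 0")
  case True then show ?thesis using dp a by (simp add: divided_powers_def)
next
  case False
  then have "gam i a \<in> J" using dp a by (simp add: divided_powers_def)
  moreover have "ideal J R" using dp by (simp add: divided_powers_def)
  ultimately show ?thesis by (simp add: ideal.Icarr)
qed

lemma (in cring) dp_fact:
  assumes dp: "divided_powers R J gam" and a: "a \<in> J"
  shows "add_pow R (fact i :: nat) (gam i a) = a [^] i"
proof (induction i)
  case 0
  then show ?case using dp a by (simp add: divided_powers_def add.nat_pow_eone)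
next
  case (Suc i)
  have "ideal J R" using dp by (simp add: divided_powers_def)
  then have ac: "a \<in> carrier R" using a by (simp add: ideal.Icarr)
  have g1: "gam 1 a = a" using dp a by (simp add: divided_powers_def)
  have pr: "gam i a \<otimes> gam 1 a = add_pow R ((i + 1) choose i) (gam (i + 1) a)"
    using dp a unfolding divided_powers_def by blast
  have "a [^] Suc i = add_pow R (fact i :: nat) (gam i a) \<otimes> gam 1 a"
    using Suc g1 ac by simp
  also have "\<dots> = add_pow R (fact i :: nat) (gam i a \<otimes> gam 1 a)"
    using dp_carrier[OF dp a] by (simp add: add_pow_ldistr)
  also have "\<dots> = add_pow R (fact i :: nat) (add_pow R (Suc i) (gam (Suc i) a))"
    using pr by simp
  also have "\<dots> = add_pow R (fact (Suc i) :: nat) (gam (Suc i) a)"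
    using dp_carrier[OF dp a] add.nat_pow_pow[of "gam (Suc i) a" "fact i" "Suc i"]
    by (simp add: mult.commute del: add.nat_pow_Suc)
  finally show ?case by simp
qed

lemma (in cring) dp_inv:
  assumes pr: "Factorial_Ring.prime (p::nat)" and ch: "\<forall>z\<in>carrier R. add_pow R p z = \<zero>"
    and dp: "divided_powers R J gam" and a: "a \<in> J" and ip: "i < p"
  shows "\<exists>c::nat. gam i a = add_pow R c (a [^] i)"
proof -
  have "\<not> p dvd fact i" using prime_dvd_fact_iff[OF pr] ip by simp
  then have "coprime p (fact i)" using pr by (simp add: prime_imp_coprime)
  then have g: "gcd (fact i) p = (1::nat)" by (simp add: coprime_iff_gcd_eq_1 gcd.commute)
  obtain x y where xy: "fact i * x = p * y + gcd (fact i) p"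
    using bezout_nat[of "fact i" p] by auto
  have gc: "gam i a \<in> carrier R" using dp_carrier[OF dp a] .
  have "add_pow R x (a [^] i) = add_pow R x (add_pow R (fact i :: nat) (gam i a))"
    using dp_fact[OF dp a, of i] by simp
  also have "\<dots> = add_pow R (fact i * x) (gam i a)"
    using gc add.nat_pow_pow[of "gam i a" x "fact i"] by (simp add: mult.commute)
  also have "\<dots> = add_pow R (p * y) (gam i a) \<oplus> add_pow R (1::nat) (gam i a)"
    using xy g gc add.nat_pow_mult[of "gam i a" "p * y" 1] by simp
  also have "\<dots> = gam i a" using charp_zero[OF ch gc] gc by simp
  finally show ?thesis by metis
qed

lemma (in cring) finsum_ideal:
  fixes r :: nat
  assumes L: "ideal L R" and f: "\<And>i. i \<le> r \<Longrightarrow> f i \<in> L"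
  shows "finsum R f {..r} \<in> L"
  using f
proof (induction r)
  case 0
  then show ?case using L by (simp add: Pi_def ideal.Icarr)
next
  case (Suc r)
  have fc: "f \<in> {..Suc r} \<rightarrow> carrier R" using Suc.prems L by (auto simp: ideal.Icarr)
  have "finsum R f {..Suc r} = f (Suc r) \<oplus> finsum R f {..r}"
    using fc by (intro finsum_Suc) auto
  moreover have "finsum R f {..r} \<in> L" using Suc by simp
  ultimately show ?case using Suc.prems L by (simp add: ideal.axioms(1) additive_subgroup.a_closed)
qed

lemma (in cring) pow_in_ideal:
  fixes n :: nat
  assumes L: "ideal L R" and x: "x \<in> L" and n: "n \<ge> 1"
  shows "x [^] n \<in> L"
proof -
  obtain k where k: "n = Suc k" using n by (metis Suc_pred' less_eq_Suc_le One_nat_def)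
  have xc: "x \<in> carrier R" using L x by (simp add: ideal.Icarr)
  have "x [^] n = x [^] k \<otimes> x" using k xc by simp
  then show ?thesis using L x xc by (simp add: ideal.I_l_closed)
qed


lemma (in cring) scal_in_ideal:
  assumes L: "ideal L R" and w: "w \<in> L"
  shows "add_pow R (c::nat) w \<in> L"
proof -
  have wc: "w \<in> carrier R" using L w by (simp add: ideal.Icarr)
  have "add_pow R c w = add_pow R c \<one> \<otimes> w" using wc add_pow_ldistr[of \<one> w c] by simp
  then show ?thesis using L w by (simp add: ideal.I_l_closed)
qed

lemma (in cring) dp_add:
  assumes pr: "Factorial_Ring.prime (p::nat)" and ch: "\<forall>z\<in>carrier R. add_pow R p z = \<zero>"
    and dp: "divided_powers R J gam" and L: "ideal L R"
    and a: "a \<in> J" and b: "b \<in> J" and aL: "a \<in> L"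
  shows "gam p (a \<oplus> b) \<ominus> (gam p a \<oplus> gam p b) \<in> L"
proof -
  obtain r where pr2: "p = Suc (Suc r)" using prime_ge_2_nat[OF pr]
    by (metis add_2_eq_Suc le_Suc_ex)
  define f where "f = (\<lambda>i. gam i a \<otimes> gam (p - i) b)"
  have fc: "\<And>i. f i \<in> carrier R" unfolding f_def using dp_carrier[OF dp a] dp_carrier[OF dp b] by simp
  have "gam p (a \<oplus> b) = finsum R f {..Suc (Suc r)}"
    using dp a b pr2 unfolding divided_powers_def f_def by simp
  also have "\<dots> = f (Suc (Suc r)) \<oplus> finsum R f {..Suc r}"
    using fc by (intro finsum_Suc) (auto simp: Pi_def)
  also have "finsum R f {..Suc r} = finsum R (\<lambda>i. f (Suc i)) {..r} \<oplus> f 0"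
    using fc by (intro finsum_Suc2) (auto simp: Pi_def)
  finally have eq: "gam p (a \<oplus> b) = f (Suc (Suc r)) \<oplus> (finsum R (\<lambda>i. f (Suc i)) {..r} \<oplus> f 0)" .
  have HM: "finsum R (\<lambda>i. f (Suc i)) {..r} \<in> L"
  proof (rule finsum_ideal[OF L])
    fix i assume "i \<le> r"
    then have "Suc i < p" using pr2 by simp
    then obtain c :: nat where c: "gam (Suc i) a = add_pow R c (a [^] Suc i)"
      using dp_inv[OF pr ch dp a] by blast
    have "a [^] Suc i \<in> L" using pow_in_ideal[OF L aL, of "Suc i"] by (simp del: nat_pow_Suc)
    then have "gam (Suc i) a \<in> L" using c scal_in_ideal[OF L] by simp
    then show "f (Suc i) \<in> L" unfolding f_def using L dp_carrier[OF dp b] by (simp add: ideal.I_r_closed)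
  qed
  have g0: "\<And>x. x \<in> J \<Longrightarrow> gam 0 x = \<one>" using dp by (simp add: divided_powers_def)
  have fp: "f (Suc (Suc r)) = gam p a" using pr2 g0 b dp_carrier[OF dp a] by (simp add: f_def)
  have f0: "f 0 = gam p b" using g0 a dp_carrier[OF dp b] by (simp add: f_def)
  define M where "M = finsum R (\<lambda>i. f (Suc i)) {..r}"
  have Mc: "M \<in> carrier R" using HM L M_def by (simp add: ideal.Icarr)
  have "gam p (a \<oplus> b) \<ominus> (gam p a \<oplus> gam p b) = M"
    using eq fp f0 Mc dp_carrier[OF dp a] dp_carrier[OF dp b]
    by (simp add: M_def[symmetric] minus_eq minus_add a_ac r_neg)
  then show ?thesis using HM M_def by simp
qed


lemma (in cring) pdp_simp:
  assumes dp: "divided_powers R J gam" and p: "0 < (p::nat)" and x: "x [^] (p ^ m) \<in> J"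
  shows "partial_dp R p m gam (p ^ (m + 1)) x = gam p (x [^] (p ^ m))"
proof -
  have e: "p ^ (m + 1) = p ^ m * p" by simp
  have "p ^ (m + 1) mod p ^ m = 0" "p ^ (m + 1) div p ^ m = p" using p by (simp_all add: e)
  then show ?thesis unfolding partial_dp_def using dp_carrier[OF dp x] by simp
qed

theorem mainTheorem5:
  fixes S :: "('s, 't) ring_scheme" and A :: "('a, 'e) ring_scheme" and P :: "('b, 'c) ring_scheme"
    and p m :: nat and aa bb :: "'s set" and delta :: "nat \<Rightarrow> 's \<Rightarrow> 's" and g :: "'s \<Rightarrow> 'a"
    and I :: "'a set" and h :: "'a \<Rightarrow> 'b" and K J :: "'b set" and gam :: "nat \<Rightarrow> 'b \<Rightarrow> 'b"
  assumes "Factorial_Ring.prime p"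
    and "cring S" and "pd_level S p m aa bb delta"
    and "cring A" and "g \<in> ring_hom S A"
    and "add_pow A p \<one>\<^bsub>A\<^esub> = \<zero>\<^bsub>A\<^esub>"
    and "ideal I A"
    and "is_pd_envelope S bb delta g A I p m P h K J gam"
  shows "(\<forall>\<phi>\<in>I. \<forall>\<psi>\<in>I.
            partial_dp P p m gam (p ^ (m + 1)) (h (\<phi> \<oplus>\<^bsub>A\<^esub> \<psi>)) \<ominus>\<^bsub>P\<^esub>
              (partial_dp P p m gam (p ^ (m + 1)) (h \<phi>) \<oplus>\<^bsub>P\<^esub>
               partial_dp P p m gam (p ^ (m + 1)) (h \<psi>)) \<in> Idl\<^bsub>P\<^esub> (h ` I))
       \<and> (\<forall>f\<in>carrier A. \<forall>\<phi>\<in>I.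
            partial_dp P p m gam (p ^ (m + 1)) (h (f \<otimes>\<^bsub>A\<^esub> \<phi>)) \<ominus>\<^bsub>P\<^esub>
              (h f [^]\<^bsub>P\<^esub> (p ^ (m + 1)) \<otimes>\<^bsub>P\<^esub> partial_dp P p m gam (p ^ (m + 1)) (h \<phi>))
              \<in> Idl\<^bsub>P\<^esub> (h ` I))
       \<and> (\<forall>\<phi>\<in>ideal_prod A I I.
            partial_dp P p m gam (p ^ (m + 1)) (h \<phi>) \<in> Idl\<^bsub>P\<^esub> (h ` I))"
proof -
  note pr = assms(1)
  have po: "pd_over S bb delta g A I p m P h K J gam"
    using assms(8) by (simp add: is_pd_envelope_def)
  then have cP: "cring P" and hom: "h \<in> ring_hom A P" and pl: "pd_level P p m K J gam"
    and hI: "h ` I \<subseteq> K"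
    by (simp_all add: pd_over_def)
  from pl have Kid: "ideal K P" and dp: "divided_powers P J gam" and JK: "J \<subseteq> K"
    and pw: "\<forall>x\<in>K. x [^]\<^bsub>P\<^esub> (p ^ m) \<in> J"
    by (simp_all add: pd_level_def)
  interpret P: cring P by (rule cP)
  interpret A: cring A by (rule assms(4))
  interpret I: ideal I A by (rule assms(7))
  have p0: "0 < p" using pr prime_gt_0_nat by blast
  have Ic: "\<And>x. x \<in> I \<Longrightarrow> x \<in> carrier A" by (rule I.Icarr)
  have hc: "\<And>x. x \<in> carrier A \<Longrightarrow> h x \<in> carrier P" using hom by (simp add: ring_hom_closed)
  have hIc: "h ` I \<subseteq> carrier P" using Ic hc by blast
  define L where "L = Idl\<^bsub>P\<^esub> (h ` I)"
  have L: "ideal L P" unfolding L_def by (rule P.genideal_ideal[OF hIc])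
  have hIL: "\<And>x. x \<in> I \<Longrightarrow> h x \<in> L" unfolding L_def using P.genideal_self[OF hIc] by blast
  have hK: "\<And>x. x \<in> I \<Longrightarrow> h x \<in> K" using hI by blast
  have Kc: "\<And>x. x \<in> K \<Longrightarrow> x \<in> carrier P" using Kid by (simp add: ideal.Icarr)
  have hpow: "\<And>n::nat. h (add_pow A n \<one>\<^bsub>A\<^esub>) = add_pow P n \<one>\<^bsub>P\<^esub>"
  proof -
    fix n :: nat show "h (add_pow A n \<one>\<^bsub>A\<^esub>) = add_pow P n \<one>\<^bsub>P\<^esub>"
    proof (induction n)
      case 0
      then show ?case using ring_hom_zero[OF hom A.ring_axioms P.ring_axioms] by simp
    next
      case (Suc n)
      then show ?case using hom by (simp add: ring_hom_add ring_hom_one)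
    qed
  qed
  have ch: "\<forall>z\<in>carrier P. add_pow P p z = \<zero>\<^bsub>P\<^esub>"
  proof
    fix z assume z: "z \<in> carrier P"
    have "add_pow P p z = add_pow P p \<one>\<^bsub>P\<^esub> \<otimes>\<^bsub>P\<^esub> z"
      using z P.add_pow_ldistr[of "\<one>\<^bsub>P\<^esub>" z p] by simp
    also have "\<dots> = \<zero>\<^bsub>P\<^esub>"
    proof -
      have "add_pow P p \<one>\<^bsub>P\<^esub> = h (add_pow A p \<one>\<^bsub>A\<^esub>)" using hpow[of p] by simp
      also have "\<dots> = \<zero>\<^bsub>P\<^esub>" using assms(6) ring_hom_zero[OF hom A.ring_axioms P.ring_axioms] by simp
      finally show ?thesis using z by simp
    qed
    finally show "add_pow P p z = \<zero>\<^bsub>P\<^esub>" .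
  qed
  define D where "D = (\<lambda>x. partial_dp P p m gam (p ^ (m + 1)) x)"
  have Dsimp: "\<And>x. x \<in> K \<Longrightarrow> D x = gam p (x [^]\<^bsub>P\<^esub> (p ^ m))"
    unfolding D_def using P.pdp_simp[OF dp p0] pw by blast
  have pmL: "\<And>x. x \<in> I \<Longrightarrow> h x [^]\<^bsub>P\<^esub> (p ^ m) \<in> L"
    using P.pow_in_ideal[OF L hIL] p0 by (simp add: Suc_leI)
  have Dc: "\<And>x. x \<in> K \<Longrightarrow> D x \<in> carrier P"
    using Dsimp P.dp_carrier[OF dp] pw by simp
  have part1: "\<And>\<phi> \<psi>. \<phi> \<in> I \<Longrightarrow> \<psi> \<in> I \<Longrightarrow>
      D (h (\<phi> \<oplus>\<^bsub>A\<^esub> \<psi>)) \<ominus>\<^bsub>P\<^esub> (D (h \<phi>) \<oplus>\<^bsub>P\<^esub> D (h \<psi>)) \<in> L"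
  proof -
    fix \<phi> \<psi> assume a: "\<phi> \<in> I" and b: "\<psi> \<in> I"
    have s: "\<phi> \<oplus>\<^bsub>A\<^esub> \<psi> \<in> I" using a b by (simp add: I.a_closed)
    have e: "h (\<phi> \<oplus>\<^bsub>A\<^esub> \<psi>) = h \<phi> \<oplus>\<^bsub>P\<^esub> h \<psi>"
      using hom a b Ic by (simp add: ring_hom_add)
    have "D (h (\<phi> \<oplus>\<^bsub>A\<^esub> \<psi>)) = gam p ((h \<phi> \<oplus>\<^bsub>P\<^esub> h \<psi>) [^]\<^bsub>P\<^esub> (p ^ m))"
      using Dsimp[OF hK[OF s]] e by simp
    also have "\<dots> = gam p (h \<phi> [^]\<^bsub>P\<^esub> (p ^ m) \<oplus>\<^bsub>P\<^esub> h \<psi> [^]\<^bsub>P\<^esub> (p ^ m))"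
      using P.frob[OF pr ch] a b Ic hc by simp
    finally show "D (h (\<phi> \<oplus>\<^bsub>A\<^esub> \<psi>)) \<ominus>\<^bsub>P\<^esub> (D (h \<phi>) \<oplus>\<^bsub>P\<^esub> D (h \<psi>)) \<in> L"
      using P.dp_add[OF pr ch dp L, of "h \<phi> [^]\<^bsub>P\<^esub> (p ^ m)" "h \<psi> [^]\<^bsub>P\<^esub> (p ^ m)"]
        pw hK a b pmL Dsimp by simp
  qed
  have part2: "\<And>f \<phi>. f \<in> carrier A \<Longrightarrow> \<phi> \<in> I \<Longrightarrow>
      D (h (f \<otimes>\<^bsub>A\<^esub> \<phi>)) = h f [^]\<^bsub>P\<^esub> (p ^ (m + 1)) \<otimes>\<^bsub>P\<^esub> D (h \<phi>)"
  proof -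
    fix f \<phi> assume f: "f \<in> carrier A" and a: "\<phi> \<in> I"
    have s: "f \<otimes>\<^bsub>A\<^esub> \<phi> \<in> I" using f a by (simp add: I.I_l_closed)
    have e: "h (f \<otimes>\<^bsub>A\<^esub> \<phi>) = h f \<otimes>\<^bsub>P\<^esub> h \<phi>"
      using hom f a Ic by (simp add: ring_hom_mult)
    have xJ: "h \<phi> [^]\<^bsub>P\<^esub> (p ^ m) \<in> J" using pw hK a by blast
    have mulax: "\<forall>c\<in>carrier P. \<forall>x\<in>J. \<forall>n. gam n (c \<otimes>\<^bsub>P\<^esub> x) = c [^]\<^bsub>P\<^esub> n \<otimes>\<^bsub>P\<^esub> gam n x"
      using dp by (simp add: divided_powers_def)
    have "D (h (f \<otimes>\<^bsub>A\<^esub> \<phi>)) = gam p ((h f \<otimes>\<^bsub>P\<^esub> h \<phi>) [^]\<^bsub>P\<^esub> (p ^ m))"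
      using Dsimp[OF hK[OF s]] e by simp
    also have "\<dots> = gam p (h f [^]\<^bsub>P\<^esub> (p ^ m) \<otimes>\<^bsub>P\<^esub> h \<phi> [^]\<^bsub>P\<^esub> (p ^ m))"
      using P.nat_pow_distrib f a Ic hc by simp
    also have "\<dots> = (h f [^]\<^bsub>P\<^esub> (p ^ m)) [^]\<^bsub>P\<^esub> p \<otimes>\<^bsub>P\<^esub> gam p (h \<phi> [^]\<^bsub>P\<^esub> (p ^ m))"
      using mulax xJ f hc by simp
    also have "(h f [^]\<^bsub>P\<^esub> (p ^ m)) [^]\<^bsub>P\<^esub> p = h f [^]\<^bsub>P\<^esub> (p ^ (m + 1))"
      using f hc P.nat_pow_pow by (simp add: mult.commute)
    finally show "D (h (f \<otimes>\<^bsub>A\<^esub> \<phi>)) = h f [^]\<^bsub>P\<^esub> (p ^ (m + 1)) \<otimes>\<^bsub>P\<^esub> D (h \<phi>)"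
      using Dsimp hK a by simp
  qed
  have z: "\<zero>\<^bsub>P\<^esub> \<in> L" using L by (simp add: ideal.axioms(1) additive_subgroup.zero_closed)
  have part3: "\<And>\<phi>. \<phi> \<in> ideal_prod A I I \<Longrightarrow> \<phi> \<in> I \<and> D (h \<phi>) \<in> L"
  proof -
    fix \<phi> assume "\<phi> \<in> ideal_prod A I I"
    then show "\<phi> \<in> I \<and> D (h \<phi>) \<in> L"
    proof (induction rule: ideal_prod.induct)
      case (prod i j)
      have ij: "i \<otimes>\<^bsub>A\<^esub> j \<in> I" using prod Ic by (simp add: I.I_l_closed)
      have "h i [^]\<^bsub>P\<^esub> (p ^ (m + 1)) \<in> L"
        using P.pow_in_ideal[OF L hIL[OF prod(1)], of "p ^ (m + 1)"] p0 by (simp add: Suc_leI)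
      then have "D (h (i \<otimes>\<^bsub>A\<^esub> j)) \<in> L"
        using part2[OF Ic[OF prod(1)] prod(2)] Dc[OF hK[OF prod(2)]] L by (simp add: ideal.I_r_closed)
      then show ?case using ij by simp
    next
      case (sum s1 s2)
      have s: "s1 \<oplus>\<^bsub>A\<^esub> s2 \<in> I" using sum by (simp add: I.a_closed)
      define d where "d = D (h (s1 \<oplus>\<^bsub>A\<^esub> s2))"
      define e where "e = D (h s1) \<oplus>\<^bsub>P\<^esub> D (h s2)"
      have de: "d \<ominus>\<^bsub>P\<^esub> e \<in> L" using part1 sum d_def e_def by simp
      have eL: "e \<in> L" using sum L e_def by (simp add: ideal.axioms(1) additive_subgroup.a_closed)
      have dc: "d \<in> carrier P" using Dc hK s d_def by simp
      have ec: "e \<in> carrier P" using eL L by (simp add: ideal.Icarr)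
      have "d = (d \<ominus>\<^bsub>P\<^esub> e) \<oplus>\<^bsub>P\<^esub> e"
        using dc ec by (simp add: P.minus_eq P.a_assoc P.l_neg)
      then have "d \<in> L" using de eL L by (metis ideal.axioms(1) additive_subgroup.a_closed)
      then show ?case using s d_def by simp
    qed
  qed
  show ?thesis
  proof (intro conjI ballI)
    fix \<phi> \<psi> assume "\<phi> \<in> I" "\<psi> \<in> I"
    then show "partial_dp P p m gam (p ^ (m + 1)) (h (\<phi> \<oplus>\<^bsub>A\<^esub> \<psi>)) \<ominus>\<^bsub>P\<^esub>
              (partial_dp P p m gam (p ^ (m + 1)) (h \<phi>) \<oplus>\<^bsub>P\<^esub>
               partial_dp P p m gam (p ^ (m + 1)) (h \<psi>)) \<in> Idl\<^bsub>P\<^esub> (h ` I)"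
      using part1 unfolding D_def L_def by simp
  next
    fix f \<phi> assume f: "f \<in> carrier A" and a: "\<phi> \<in> I"
    have dc: "D (h \<phi>) \<in> carrier P" using Dc hK a by simp
    have "D (h (f \<otimes>\<^bsub>A\<^esub> \<phi>)) \<ominus>\<^bsub>P\<^esub> (h f [^]\<^bsub>P\<^esub> (p ^ (m + 1)) \<otimes>\<^bsub>P\<^esub> D (h \<phi>)) = \<zero>\<^bsub>P\<^esub>"
      using part2[OF f a] dc hc[OF f] by (simp add: P.minus_eq P.r_neg)
    then show "partial_dp P p m gam (p ^ (m + 1)) (h (f \<otimes>\<^bsub>A\<^esub> \<phi>)) \<ominus>\<^bsub>P\<^esub>
              (h f [^]\<^bsub>P\<^esub> (p ^ (m + 1)) \<otimes>\<^bsub>P\<^esub> partial_dp P p m gam (p ^ (m + 1)) (h \<phi>))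
              \<in> Idl\<^bsub>P\<^esub> (h ` I)"
      using z unfolding D_def L_def by simp
  next
    fix \<phi> assume "\<phi> \<in> ideal_prod A I I"
    then show "partial_dp P p m gam (p ^ (m + 1)) (h \<phi>) \<in> Idl\<^bsub>P\<^esub> (h ` I)"
      using part3 unfolding D_def L_def by simp
  qed
qed

end
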